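(* Let $n\ge 1$ and $1\le m\le n$. Then the suffix length of $\mathcal{A}(n,m)$ with respect to lexicographic order satisfies $S(n,m) = 2\,|\mathcal{A}(n,m)| - 1$.
   Context: An ascending composition of a positive integer $n$ is a finite sequence of positive integers $(a_1,\dots,a_k)$, $k\ge1$, with $a_1+\dots+a_k=n$ and $a_1\le\dots\le a_k$. For $1\le m\le n$, $\mathcal{A}(n,m)$ is the set of ascending compositions of $n$ with $a_1\ge m$. List the elements of $\mathcal{A}(n,m)$ in increasing lexicographic order as $b^{(1)},\dots,b^{(N)}$. The suffix length $S(n,m)$ is defined as the number of parts of $b^{(1)}$ plus, for each $i=1,\dots,N-1$, the number of parts of $b^{(i+1)}$ lying beyond the longest common prefix of $b^{(i)}$ and $b^{(i+1)}$ (i.e. if the longest common prefix has length $j$ and $b^{(i+1)}$ has $k'$ parts, this contributes $k'-j$). Equivalently, it counts the number of part-writes needed to generate the list when each composition is obtained from the previous one by rewriting only the differing suffix. *)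

theory Defs
  imports Main
begin

definition asc_comps :: "nat \<Rightarrow> nat \<Rightarrow> nat list set" where
  "asc_comps n m = {xs. xs \<noteq> [] \<and> (\<forall>x\<in>set xs. 0 < x) \<and> sum_list xs = n
                        \<and> sorted xs \<and> m \<le> hd xs}"

definition lex_less :: "nat list \<Rightarrow> nat list \<Rightarrow> bool" where
  "lex_less xs ys \<longleftrightarrow> (xs, ys) \<in> lexord {(a, b). a < b}"

definition lex_listing :: "nat \<Rightarrow> nat \<Rightarrow> nat list list" where
  "lex_listing n m = (THE bs. set bs = asc_comps n m \<and> sorted_wrt lex_less bs)"

fun lcp_len :: "nat list \<Rightarrow> nat list \<Rightarrow> nat" where
  "lcp_len (x # xs) (y # ys) = (if x = y then Suc (lcp_len xs ys) else 0)"
| "lcp_len _ _ = 0"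

definition suffix_length :: "nat list list \<Rightarrow> nat" where
  "suffix_length bs = length (bs ! 0) +
     (\<Sum>i<length bs - 1. length (bs ! (i+1)) - lcp_len (bs ! i) (bs ! (i+1)))"

definition S :: "nat \<Rightarrow> nat \<Rightarrow> nat" where
  "S n m = suffix_length (lex_listing n m)"

end

theory Submission
  imports Defs
begin

lemma lex_asym: "lex_less x y \<Longrightarrow> \<not> lex_less y x"
proof -
  have "asym {(a::nat, b). a < b}" by (auto intro: asymI)
  then show "lex_less x y \<Longrightarrow> \<not> lex_less y x"
    unfolding lex_less_def by (auto dest: lexord_asymmetric)
qed

lemma lex_irr: "\<not> lex_less x x"
  using lex_asym by blast

lemma sorted_unique:
  "sorted_wrt lex_less xs \<Longrightarrow> sorted_wrt lex_less ys \<Longrightarrow> set xs = set ys \<Longrightarrow> xs = ys"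
proof (induction xs arbitrary: ys)
  case Nil
  then show ?case by simp
next
  case (Cons x xs)
  then obtain y ys' where ys: "ys = y # ys'" by (cases ys) auto
  have xy: "x = y"
  proof (rule ccontr)
    assume "x \<noteq> y"
    then have "lex_less y x" using Cons.prems ys by (metis set_ConsD sorted_wrt.simps(2) list.set_intros(1))
    moreover have "lex_less x y" using Cons.prems ys \<open>x \<noteq> y\<close>
      by (metis set_ConsD sorted_wrt.simps(2) list.set_intros(1))
    ultimately show False using lex_asym by blast
  qed
  have "x \<notin> set xs" using Cons.prems(1) lex_irr by auto
  moreover have "y \<notin> set ys'" using Cons.prems(2) ys lex_irr by auto
  ultimately have "set xs = set ys'" using Cons.prems(3) ys xy by auto
  then have "xs = ys'" using Cons ys by auto
  then show ?case using ys xy by simp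
qed

lemma sorted_distinct: "sorted_wrt lex_less xs \<Longrightarrow> distinct xs"
  by (induction xs) (auto simp: lex_irr)

function lst :: "nat \<Rightarrow> nat \<Rightarrow> nat list list" where
  "lst n m = (if n = 0 then [] else
     concat (map (\<lambda>a. map ((#) a) (lst (n-a) a)) [max m 1..<Suc (n div 2)]) @ [[n]])"
  by pat_completeness auto
termination by (relation "measure fst") auto

declare lst.simps[simp del]

lemma lst_unf: "n \<noteq> 0 \<Longrightarrow> lst n m =
  concat (map (\<lambda>a. map ((#) a) (lst (n-a) a)) [max m 1..<Suc (n div 2)]) @ [[n]]"
  by (subst lst.simps) simp

lemma lst_ne: "n \<noteq> 0 \<Longrightarrow> lst n m \<noteq> []"
  by (simp add: lst_unf)

fun tc :: "nat list \<Rightarrow> nat list list \<Rightarrow> nat" where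
  "tc p [] = 0"
| "tc p (b # bs) = (length b - lcp_len p b) + tc b bs"

lemma sum_tc: "(\<Sum>i<length bs. length ((b#bs) ! (i+1)) - lcp_len ((b#bs) ! i) ((b#bs) ! (i+1))) = tc b bs"
proof (induction bs arbitrary: b)
  case Nil
  then show ?case by simp
next
  case (Cons c cs)
  show ?case
    using Cons[of c] by (simp add: sum.lessThan_Suc_shift del: sum.lessThan_Suc)
qed

lemma suffix_tc: "suffix_length (b # bs) = tc [] (b # bs)"
  using sum_tc[where b=b and bs=bs] by (simp add: suffix_length_def)

lemma tc_append: "tc p (xs @ ys) = tc p xs + tc (last (p # xs)) ys"
  by (induction xs arbitrary: p) auto

lemma tc_map_cons: "tc (a # p) (map ((#) a) bs) = tc p bs"
  by (induction bs arbitrary: p) auto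

lemma tc_block:
  assumes "bs \<noteq> []" "p = [] \<or> hd p \<noteq> a"
  shows "tc p (map ((#) a) bs) = 1 + tc [] bs"
proof -
  obtain b rest where bs: "bs = b # rest" using assms(1) by (cases bs) auto
  have "lcp_len p (a # b) = 0" using assms(2) by (cases p) auto
  then show ?thesis using bs tc_map_cons[of a b rest] by simp
qed

lemma tc_blocks:
  assumes "distinct as" "\<forall>a\<in>set as. g a \<noteq> [] \<and> a < n"
    "p = [] \<or> (hd p \<notin> set as \<and> hd p \<noteq> n)"
  shows "tc p (concat (map (\<lambda>a. map ((#) a) (g a)) as) @ [[n]])
       = (\<Sum>a\<leftarrow>as. 1 + tc [] (g a)) + 1"
  using assms
proof (induction as arbitrary: p)
  case Nil
  have "lcp_len p [n] = 0" using Nil.prems(3) by (cases p) auto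
  then show ?case by simp
next
  case (Cons a as)
  let ?B = "map ((#) a) (g a)"
  have ne: "g a \<noteq> []" using Cons.prems by auto
  have "p = [] \<or> hd p \<noteq> a" using Cons.prems(3) by auto
  then have 1: "tc p ?B = 1 + tc [] (g a)" using tc_block[OF ne] by blast
  have l: "last (p # ?B) = a # last (g a)" using ne by (simp add: last_map)
  have 2: "tc (last (p # ?B)) (concat (map (\<lambda>a. map ((#) a) (g a)) as) @ [[n]])
       = (\<Sum>a\<leftarrow>as. 1 + tc [] (g a)) + 1"
    apply (rule Cons.IH)
    using Cons.prems l by auto
  show ?case using 1 2 by (simp add: tc_append)
qed

lemma tc_lst: "n \<noteq> 0 \<Longrightarrow> tc [] (lst n m) = 2 * length (lst n m) - 1"
proof (induction n arbitrary: m rule: less_induct)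
  case (less n)
  define as where "as = [max m 1..<Suc (n div 2)]"
  define g where "g = (\<lambda>a. lst (n-a) a)"
  have L: "lst n m = concat (map (\<lambda>a. map ((#) a) (g a)) as) @ [[n]]"
    using less.prems by (simp add: lst_unf as_def g_def)
  have asp: "\<forall>a\<in>set as. 1 \<le> a \<and> 2 * a \<le> n" unfolding as_def by auto
  have gne: "\<forall>a\<in>set as. g a \<noteq> [] \<and> a < n"
    using asp less.prems by (auto simp: g_def intro!: lst_ne)
  have "tc [] (lst n m) = (\<Sum>a\<leftarrow>as. 1 + tc [] (g a)) + 1"
    unfolding L by (rule tc_blocks) (auto simp: as_def gne)
  also have "(\<Sum>a\<leftarrow>as. 1 + tc [] (g a)) = (\<Sum>a\<leftarrow>as. 2 * length (g a))"
  proof (rule arg_cong[where f=sum_list], rule map_cong[OF refl])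
    fix a assume a: "a \<in> set as"
    then have "tc [] (g a) = 2 * length (g a) - 1"
      using asp less.IH[of "n-a" a] by (auto simp: g_def)
    moreover have "g a \<noteq> []" using gne a by auto
    ultimately show "1 + tc [] (g a) = 2 * length (g a)" by simp
  qed
  also have "\<dots> = 2 * (\<Sum>a\<leftarrow>as. length (g a))"
    by (simp add: sum_list_const_mult)
  finally show ?case
    unfolding L by (simp add: length_concat comp_def)
qed

lemma sorted_hd_le: "sorted xs \<Longrightarrow> x \<in> set xs \<Longrightarrow> hd xs \<le> x"
  by (cases xs) auto

lemma set_lst: "1 \<le> m \<Longrightarrow> m \<le> n \<Longrightarrow> set (lst n m) = asc_comps n m"
proof (induction n arbitrary: m rule: less_induct)
  case (less n)
  have n0: "n \<noteq> 0" using less.prems by auto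
  define as where "as = [max m 1..<Suc (n div 2)]"
  have IH: "set (lst (n-a) a) = asc_comps (n-a) a" if a: "a \<in> set as" for a
  proof -
    have "1 \<le> a" "2 * a \<le> n" using a unfolding as_def by auto
    then have "n - a < n" "1 \<le> a" "a \<le> n - a" by auto
    then show ?thesis by (rule less.IH)
  qed
  have L: "set (lst n m) = (\<Union>a\<in>set as. (#) a ` set (lst (n-a) a)) \<union> {[n]}"
    using n0 by (simp add: lst_unf as_def)
  show ?case
  proof (rule set_eqI, rule iffI)
    fix xs assume "xs \<in> set (lst n m)"
    then consider "xs = [n]" | a ys where "a \<in> set as" "ys \<in> asc_comps (n-a) a" "xs = a # ys"
      using L IH by auto
    then show "xs \<in> asc_comps n m"
    proof cases
      case 1
      then show ?thesis using less.prems by (auto simp: asc_comps_def)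
    next
      case 2
      have ys: "ys \<noteq> []" "\<forall>x\<in>set ys. 0 < x" "sum_list ys = n - a" "sorted ys" "a \<le> hd ys"
        using 2(2) by (simp_all add: asc_comps_def)
      have le: "\<forall>y\<in>set ys. a \<le> y"
        using ys(4,5) sorted_hd_le order_trans by blast
      have a: "1 \<le> a" "m \<le> a" "2 * a \<le> n" using 2(1) unfolding as_def by auto
      show ?thesis unfolding 2(3) asc_comps_def
        using ys le a by simp
    qed
  next
    fix xs assume xs: "xs \<in> asc_comps n m"
    then obtain a ys where xa: "xs = a # ys" unfolding asc_comps_def by (cases xs) auto
    show "xs \<in> set (lst n m)"
    proof (cases "ys = []")
      case True
      then show ?thesis using xs xa L by (auto simp: asc_comps_def)
    next
      case False
      have le: "\<forall>y\<in>set ys. a \<le> y" using xs xa by (auto simp: asc_comps_def)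
      have "hd ys \<in> set ys" using False by simp
      then have "a \<le> sum_list ys" using le member_le_sum_list[of "hd ys" ys] by auto
      then have "ys \<in> asc_comps (n-a) a" "a \<in> set as"
        using xs xa False le less.prems by (auto simp: asc_comps_def as_def)
      then show ?thesis using L IH xa by auto
    qed
  qed
qed

lemma lex_cons_less: "a < b \<Longrightarrow> lex_less (a # x) (b # y)"
  by (simp add: lex_less_def)

lemma sorted_blocks:
  assumes "sorted_wrt (<) as" "\<forall>a\<in>set as. a < n" "\<forall>a\<in>set as. sorted_wrt lex_less (g a)"
  shows "sorted_wrt lex_less (concat (map (\<lambda>a. map ((#) a) (g a)) as) @ [[n]])"
  using assms
proof (induction as)
  case Nil
  then show ?case by simp
next
  case (Cons a as)
  have b: "sorted_wrt lex_less (map ((#) a) (g a))"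
    using Cons.prems(3) by (simp add: sorted_wrt_map lex_less_def)
  have c: "\<forall>x\<in>set (map ((#) a) (g a)). \<forall>y\<in>set (concat (map (\<lambda>a. map ((#) a) (g a)) as) @ [[n]]).
     lex_less x y"
    using Cons.prems by (auto intro!: lex_cons_less)
  show ?case using Cons b c by (simp add: sorted_wrt_append)
qed

lemma sorted_lst: "sorted_wrt lex_less (lst n m)"
proof (induction n arbitrary: m rule: less_induct)
  case (less n)
  show ?case
  proof (cases "n = 0")
    case True
    then show ?thesis by (simp add: lst.simps)
  next
    case False
    show ?thesis unfolding lst_unf[OF False]
      by (rule sorted_blocks) (use less False in \<open>auto simp del: upt_Suc\<close>)
  qed
qed

theorem theorem1:
  fixes n m :: nat
  assumes "1 \<le> n" and "1 \<le> m" and "m \<le> n"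
  shows "S n m = 2 * card (asc_comps n m) - 1"
proof -
  have "lex_listing n m = lst n m"
    unfolding lex_listing_def
  proof (rule the_equality)
    show "set (lst n m) = asc_comps n m \<and> sorted_wrt lex_less (lst n m)"
      using set_lst[OF assms(2,3)] sorted_lst by simp
  next
    fix bs assume "set bs = asc_comps n m \<and> sorted_wrt lex_less bs"
    then show "bs = lst n m"
      using sorted_unique[of bs "lst n m"] set_lst[OF assms(2,3)] sorted_lst by simp
  qed
  moreover obtain b bs where "lst n m = b # bs"
    using lst_ne[of n m] assms by (cases "lst n m") auto
  moreover have "card (asc_comps n m) = length (lst n m)"
    using set_lst[OF assms(2,3)] sorted_distinct[OF sorted_lst] distinct_card by metis
  ultimately show ?thesis
    using tc_lst[of n m] assms suffix_tc by (simp add: S_def)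
qed

end
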